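(* Let $\mathbf{C}$ be a category of $\mathbf{FI}$ type, $c$ an object and $V$ a finite-dimensional $G_c$-representation with character $\chi_V$. Then the character of the $\mathbf{C}$-module $\mathrm{Ind}_c(V)$ is $$\chi_{\mathrm{Ind}_c(V)}=\sum_{\mu\in\mathrm{conj}(G_c)}\chi_V(\mu)\binom{X}{\mu},$$ where $\mathrm{conj}(G_c)$ is the set of conjugacy classes of $G_c$ and $\chi_V(\mu)$ is the value of $\chi_V$ on any element of $\mu$. In particular it is a character polynomial of degree $c$.
   Context: A category $\mathbf{C}$ is of $\mathbf{FI}$ type if: (1) all Hom-sets are finite; (2) every morphism is a monomorphism and every endomorphism is an isomorphism; (3) for all objects $c,d$ the group $G_d=\mathrm{Aut}_{\mathbf{C}}(d)$ acts transitively on $\mathrm{Hom}_{\mathbf{C}}(c,d)$; (4) for every $d$ only finitely many isomorphism classes of $c$ have $\mathrm{Hom}(c,d)\neq\emptyset$; (5) every pair $c_1\to d\leftarrow c_2$ has a pullback, and every pair $f_i:p\to c_i$ has a weak push-out, i.e. a commutative pullback square $g_i:c_i\to d$ such that for every other pullback square $h_i:c_i\to z$ with $h_1f_1=h_2f_2$ there is a unique $h:d\to z$ with $hg_i=h_i$. $\mathrm{Ind}_c(V)$ is the $\mathbf{C}$-module $d\mapsto\mathbb{C}[\mathrm{Hom}(c,d)]\otimes_{\mathbb{C}[G_c]}V$ (morphisms act by postcomposition); its character is the collection of characters of the $G_d$-representations $\mathrm{Ind}_c(V)_d$. Binomial set: $\binom{d}{c}=\mathrm{Hom}(c,d)/G_c$.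 For a conjugacy class $\mu\subseteq G_c$, $\binom{X}{\mu}$ is the class function on every $G_d$ given by $\sigma\mapsto\#\{[f]\in\binom{d}{c}:\exists\psi\in\mu,\ \sigma f=f\psi\}$, of degree $c$. Character polynomials are $\mathbb{C}$-linear combinations of these. *)

theory Defs
  imports Complex_Main "HOL-Library.Function_Algebras"
begin

record ('o, 'm) cat =
  Hom  :: "'o \<Rightarrow> 'o \<Rightarrow> 'm set"
  Comp :: "'m \<Rightarrow> 'm \<Rightarrow> 'm"   (* Comp C g f = g \<circ> f *)
  Id   :: "'o \<Rightarrow> 'm"

definition is_category :: "('o, 'm) cat \<Rightarrow> bool" where
  "is_category C \<longleftrightarrow>
     (\<forall>x y z f g. f \<in> Hom C x y \<longrightarrow> g \<in> Hom C y z \<longrightarrow> Comp C g f \<in> Hom C x z) \<and>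
     (\<forall>w x y z f g h. f \<in> Hom C w x \<longrightarrow> g \<in> Hom C x y \<longrightarrow> h \<in> Hom C y z \<longrightarrow>
         Comp C h (Comp C g f) = Comp C (Comp C h g) f) \<and>
     (\<forall>x. Id C x \<in> Hom C x x) \<and>
     (\<forall>x y f. f \<in> Hom C x y \<longrightarrow> Comp C (Id C y) f = f \<and> Comp C f (Id C x) = f) \<and>
     (\<forall>x y x' y'. (x, y) \<noteq> (x', y') \<longrightarrow> Hom C x y \<inter> Hom C x' y' = {})"

definition Aut :: "('o, 'm) cat \<Rightarrow> 'o \<Rightarrow> 'm set" where
  "Aut C d = {f \<in> Hom C d d. \<exists>g \<in> Hom C d d. Comp C g f = Id C d \<and> Comp C f g = Id C d}"

definition cinv :: "('o, 'm) cat \<Rightarrow> 'o \<Rightarrow> 'm \<Rightarrow> 'm" where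
  "cinv C d f = (THE g. g \<in> Hom C d d \<and> Comp C g f = Id C d \<and> Comp C f g = Id C d)"

definition isomorphic :: "('o, 'm) cat \<Rightarrow> 'o \<Rightarrow> 'o \<Rightarrow> bool" where
  "isomorphic C x y \<longleftrightarrow> (\<exists>f \<in> Hom C x y. \<exists>g \<in> Hom C y x.
      Comp C g f = Id C x \<and> Comp C f g = Id C y)"

definition is_pullback :: "('o, 'm) cat \<Rightarrow> 'o \<Rightarrow> 'o \<Rightarrow> 'o \<Rightarrow> 'm \<Rightarrow> 'm \<Rightarrow> 'o \<Rightarrow> 'm \<Rightarrow> 'm \<Rightarrow> bool" where
  "is_pullback C c1 c2 d g1 g2 p f1 f2 \<longleftrightarrow>
     g1 \<in> Hom C c1 d \<and> g2 \<in> Hom C c2 d \<and> f1 \<in> Hom C p c1 \<and> f2 \<in> Hom C p c2 \<and>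
     Comp C g1 f1 = Comp C g2 f2 \<and>
     (\<forall>z h1 h2. h1 \<in> Hom C z c1 \<longrightarrow> h2 \<in> Hom C z c2 \<longrightarrow> Comp C g1 h1 = Comp C g2 h2 \<longrightarrow>
        (\<exists>!h. h \<in> Hom C z p \<and> Comp C f1 h = h1 \<and> Comp C f2 h = h2))"

definition FI_type :: "('o, 'm) cat \<Rightarrow> bool" where
  "FI_type C \<longleftrightarrow> is_category C \<and>
     \<comment> \<open>(1) finite Hom-sets\<close>
     (\<forall>x y. finite (Hom C x y)) \<and>
     \<comment> \<open>(2) monomorphisms; endomorphisms are isomorphisms\<close>
     (\<forall>w x y f g h. f \<in> Hom C x y \<longrightarrow> g \<in> Hom C w x \<longrightarrow> h \<in> Hom C w x \<longrightarrow>
         Comp C f g = Comp C f h \<longrightarrow> g = h) \<and>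
     (\<forall>x. Hom C x x = Aut C x) \<and>
     \<comment> \<open>(3) transitivity of the action of \<open>G_d\<close> on \<open>Hom(c,d)\<close>\<close>
     (\<forall>c d f f'. f \<in> Hom C c d \<longrightarrow> f' \<in> Hom C c d \<longrightarrow> (\<exists>\<sigma> \<in> Aut C d. f' = Comp C \<sigma> f)) \<and>
     \<comment> \<open>(4) finitely many isomorphism classes map into each \<open>d\<close>\<close>
     (\<forall>d. \<exists>S. finite S \<and> (\<forall>c. Hom C c d \<noteq> {} \<longrightarrow> (\<exists>s \<in> S. isomorphic C c s))) \<and>
     \<comment> \<open>(5a) pullbacks\<close>
     (\<forall>c1 c2 d g1 g2. g1 \<in> Hom C c1 d \<longrightarrow> g2 \<in> Hom C c2 d \<longrightarrow>
         (\<exists>p f1 f2. is_pullback C c1 c2 d g1 g2 p f1 f2)) \<and>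
     \<comment> \<open>(5b) weak push-outs\<close>
     (\<forall>p c1 c2 f1 f2. f1 \<in> Hom C p c1 \<longrightarrow> f2 \<in> Hom C p c2 \<longrightarrow>
         (\<exists>d g1 g2. is_pullback C c1 c2 d g1 g2 p f1 f2 \<and>
            (\<forall>z h1 h2. is_pullback C c1 c2 z h1 h2 p f1 f2 \<longrightarrow>
               (\<exists>!h. h \<in> Hom C d z \<and> Comp C h g1 = h1 \<and> Comp C h g2 = h2))))"

text \<open>Vectors of \<open>\<complex>^n\<close> are functions \<open>nat \<Rightarrow> complex\<close> (only indices \<open>< n\<close> matter);
  \<open>\<rho> g i j\<close> is the \<open>(i,j)\<close> entry of the matrix of \<open>g\<close>.\<close>
definition is_matrep :: "('o, 'm) cat \<Rightarrow> 'o \<Rightarrow> nat \<Rightarrow> ('m \<Rightarrow> nat \<Rightarrow> nat \<Rightarrow> complex) \<Rightarrow> bool" where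
  "is_matrep C c n \<rho> \<longleftrightarrow>
     (\<forall>i<n. \<forall>j<n. \<rho> (Id C c) i j = (if i = j then 1 else 0)) \<and>
     (\<forall>g \<in> Aut C c. \<forall>h \<in> Aut C c. \<forall>i<n. \<forall>j<n.
         \<rho> (Comp C g h) i j = (\<Sum>k<n. \<rho> g i k * \<rho> h k j))"

definition rep_char :: "nat \<Rightarrow> ('m \<Rightarrow> nat \<Rightarrow> nat \<Rightarrow> complex) \<Rightarrow> 'm \<Rightarrow> complex" where
  "rep_char n \<rho> g = (\<Sum>i<n. \<rho> g i i)"

definition rep_act :: "nat \<Rightarrow> ('m \<Rightarrow> nat \<Rightarrow> nat \<Rightarrow> complex) \<Rightarrow> 'm \<Rightarrow> (nat \<Rightarrow> complex) \<Rightarrow> (nat \<Rightarrow> complex)" where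
  "rep_act n \<rho> g v = (\<lambda>i. if i < n then (\<Sum>j<n. \<rho> g i j * v j) else 0)"

definition tscale :: "complex \<Rightarrow> ('m \<Rightarrow> nat \<Rightarrow> complex) \<Rightarrow> ('m \<Rightarrow> nat \<Rightarrow> complex)" where
  "tscale a F = (\<lambda>f i. a * F f i)"

text \<open>For a linear map \<open>L\<close> of \<open>W\<close> preserving the subspace \<open>K \<subseteq> W\<close>: choose a basis
  \<open>BK\<close> of \<open>K\<close>, extend it to a basis \<open>B\<close> of \<open>W\<close>; then the images of \<open>B - BK\<close> form a basis
  of \<open>W/K\<close> and the trace of the induced map on \<open>W/K\<close> is the sum of the corresponding
  diagonal coordinates.\<close>
definition quot_trace :: "('m \<Rightarrow> nat \<Rightarrow> complex) set \<Rightarrow> ('m \<Rightarrow> nat \<Rightarrow> complex) set \<Rightarrow>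
    (('m \<Rightarrow> nat \<Rightarrow> complex) \<Rightarrow> ('m \<Rightarrow> nat \<Rightarrow> complex)) \<Rightarrow> complex" where
  "quot_trace W K L =
     (let BK = (SOME B. B \<subseteq> K \<and> \<not> module.dependent tscale B \<and> module.span tscale B = K);
          B  = (SOME B. BK \<subseteq> B \<and> B \<subseteq> W \<and> \<not> module.dependent tscale B \<and> module.span tscale B = W)
      in (\<Sum>b \<in> B - BK. module.representation tscale B (L b) b))"

text \<open>\<open>\<complex>[Hom(c,d)] \<otimes>\<^sub>\<complex> \<complex>^n\<close> is realised as functions \<open>F :: 'm \<Rightarrow> nat \<Rightarrow> complex\<close>
  supported on \<open>Hom(c,d) \<times> {..<n}\<close>; \<open>tens f v\<close> is the pure tensor \<open>f \<otimes> v\<close>.\<close>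
definition tens :: "nat \<Rightarrow> 'm \<Rightarrow> (nat \<Rightarrow> complex) \<Rightarrow> ('m \<Rightarrow> nat \<Rightarrow> complex)" where
  "tens n f v = (\<lambda>f' i. if f' = f \<and> i < n then v i else 0)"

definition tensor_space :: "('o, 'm) cat \<Rightarrow> 'o \<Rightarrow> nat \<Rightarrow> 'o \<Rightarrow> ('m \<Rightarrow> nat \<Rightarrow> complex) set" where
  "tensor_space C c n d = {F. \<forall>f i. F f i \<noteq> 0 \<longrightarrow> f \<in> Hom C c d \<and> i < n}"

text \<open>The relations defining \<open>\<otimes>\<^bsub>\<complex>[G_c]\<^esub>\<close>: \<open>(f \<circ> g) \<otimes> v = f \<otimes> g v\<close>.\<close>
definition balance_space :: "('o, 'm) cat \<Rightarrow> 'o \<Rightarrow> nat \<Rightarrow> ('m \<Rightarrow> nat \<Rightarrow> nat \<Rightarrow> complex) \<Rightarrow> 'o \<Rightarrow>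
    ('m \<Rightarrow> nat \<Rightarrow> complex) set" where
  "balance_space C c n \<rho> d = module.span tscale
     {(\<lambda>f' i. tens n (Comp C f g) v f' i - tens n f (rep_act n \<rho> g v) f' i) | f g v.
        f \<in> Hom C c d \<and> g \<in> Aut C c}"

text \<open>Action of \<open>\<sigma> \<in> G_d\<close> by postcomposition: \<open>\<sigma> (f \<otimes> v) = (\<sigma> \<circ> f) \<otimes> v\<close>.\<close>
definition post_act :: "('o, 'm) cat \<Rightarrow> 'o \<Rightarrow> 'o \<Rightarrow> 'm \<Rightarrow> ('m \<Rightarrow> nat \<Rightarrow> complex) \<Rightarrow> ('m \<Rightarrow> nat \<Rightarrow> complex)" where
  "post_act C c d \<sigma> F = (\<lambda>f' i. if f' \<in> Hom C c d then F (Comp C (cinv C d \<sigma>) f') i else 0)"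

text \<open>Character of the \<open>G_d\<close>-representation \<open>Ind_c(V)_d = \<complex>[Hom(c,d)] \<otimes>\<^bsub>\<complex>[G_c]\<^esub> V\<close> at \<open>\<sigma>\<close>.\<close>
definition Ind_char :: "('o, 'm) cat \<Rightarrow> 'o \<Rightarrow> nat \<Rightarrow> ('m \<Rightarrow> nat \<Rightarrow> nat \<Rightarrow> complex) \<Rightarrow> 'o \<Rightarrow> 'm \<Rightarrow> complex" where
  "Ind_char C c n \<rho> d \<sigma> =
     quot_trace (tensor_space C c n d) (balance_space C c n \<rho> d) (post_act C c d \<sigma>)"

definition binom_set :: "('o, 'm) cat \<Rightarrow> 'o \<Rightarrow> 'o \<Rightarrow> 'm set set" where
  "binom_set C c d = (\<lambda>f. (\<lambda>g. Comp C f g) ` Aut C c) ` Hom C c d"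

definition conj_classes :: "('o, 'm) cat \<Rightarrow> 'o \<Rightarrow> 'm set set" where
  "conj_classes C c = (\<lambda>g. {Comp C (Comp C h g) (cinv C c h) | h. h \<in> Aut C c}) ` Aut C c"

definition binomX :: "('o, 'm) cat \<Rightarrow> 'o \<Rightarrow> 'm set \<Rightarrow> 'o \<Rightarrow> 'm \<Rightarrow> nat" where
  "binomX C c \<mu> d \<sigma> = card {Ob \<in> binom_set C c d. \<exists>f \<in> Ob. \<exists>\<psi> \<in> \<mu>. Comp C \<sigma> f = Comp C f \<psi>}"

definition class_val :: "nat \<Rightarrow> ('m \<Rightarrow> nat \<Rightarrow> nat \<Rightarrow> complex) \<Rightarrow> 'm set \<Rightarrow> complex" where
  "class_val n \<rho> \<mu> = rep_char n \<rho> (SOME g. g \<in> \<mu>)"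

end

theory Submission
  imports Defs
begin


lemma sum_single_nz:
  assumes "finite A" "x \<in> A" "\<And>y. y \<in> A \<Longrightarrow> y \<noteq> x \<Longrightarrow> F y = 0"
  shows "sum F A = F x"
proof -
  have "sum F A = F x + sum F (A - {x})" using sum.remove[OF assms(1,2)] .
  also have "sum F (A - {x}) = 0" by (rule sum.neutral) (use assms(3) in auto)
  finally show ?thesis by simp
qed

context vector_space begin

lemma L_zero:
  fixes L :: "'b \<Rightarrow> 'b"
  assumes add: "\<And>x y. L (x + y) = L x + L y"
  shows "L 0 = 0"
proof -
  have "L 0 + L 0 = L 0 + 0" using add[of 0 0] by simp
  thus ?thesis by (rule add_left_imp_eq)
qed

lemma L_sum:
  fixes L :: "'b \<Rightarrow> 'b"
  assumes add: "\<And>x y. L (x + y) = L x + L y"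
  shows "L (sum f A) = (\<Sum>x\<in>A. L (f x))"
proof (induct A rule: infinite_finite_induct)
  case (infinite A) thus ?case using L_zero[OF add] by simp
next
  case empty thus ?case using L_zero[OF add] by simp
next
  case (insert x F) thus ?case by (simp add: add)
qed

lemma trace_indep:
  fixes L :: "'b \<Rightarrow> 'b"
  assumes fB: "finite B" and fB': "finite B'" and iB: "independent B" and iB': "independent B'"
    and sp: "span B = span B'"
    and add: "\<And>x y. L (x + y) = L x + L y" and sc: "\<And>a x. L (a *s x) = a *s L x"
    and inv: "L ` span B \<subseteq> span B"
  shows "(\<Sum>b\<in>B. representation B (L b) b) = (\<Sum>b\<in>B'. representation B' (L b) b)"
proof -
  have Lsp: "L x \<in> span B" if "x \<in> span B" for x using inv that by auto
  have Bsp: "b \<in> span B" if "b \<in> B" for b using that span_base by auto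
  have B'sp: "b \<in> span B" if "b \<in> B'" for b using that span_base sp by auto
  have Bsp': "b \<in> span B'" if "b \<in> B" for b using that span_base sp by auto
  have "(\<Sum>b\<in>B. representation B (L b) b)
      = (\<Sum>b\<in>B. \<Sum>b'\<in>B'. representation B' b b' * representation B (L b') b)"
  proof (rule sum.cong[OF refl])
    fix b assume b: "b \<in> B"
    have "b = (\<Sum>b'\<in>B'. representation B' b b' *s b')"
      by (rule sum_representation_eq[symmetric]) (use iB' Bsp' b fB' in auto)
    hence "L b = L (\<Sum>b'\<in>B'. representation B' b b' *s b')" by (rule arg_cong[of _ _ L])
    also have "\<dots> = (\<Sum>b'\<in>B'. L (representation B' b b' *s b'))" by (rule L_sum[OF add, of "\<lambda>b'. representation B' b b' *s b'" B'])
    also have "\<dots> = (\<Sum>b'\<in>B'. representation B' b b' *s L b')" by (simp add: sc)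
    finally have "L b = (\<Sum>b'\<in>B'. representation B' b b' *s L b')" .
    hence "representation B (L b) = representation B (\<Sum>b'\<in>B'. representation B' b b' *s L b')" by (rule arg_cong[of _ _ "representation B"])
    also have "\<dots> = (\<lambda>x. \<Sum>b'\<in>B'. representation B (representation B' b b' *s L b') x)"
      by (rule representation_sum[OF iB]) (use B'sp Lsp span_scale in auto)
    also have "\<dots> = (\<lambda>x. \<Sum>b'\<in>B'. representation B' b b' * representation B (L b') x)"
      using representation_scale[OF iB] B'sp Lsp by auto
    finally show "representation B (L b) b = (\<Sum>b'\<in>B'. representation B' b b' * representation B (L b') b)"
      by simp
  qed
  also have "\<dots> = (\<Sum>b'\<in>B'. \<Sum>b\<in>B. representation B (L b') b * representation B' b b')"
    by (subst sum.swap) (simp add: mult.commute)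
  also have "\<dots> = (\<Sum>b'\<in>B'. representation B' (L b') b')"
  proof (rule sum.cong[OF refl])
    fix b' assume b': "b' \<in> B'"
    have Lb': "L b' \<in> span B" using Lsp B'sp b' by auto
    have "L b' = (\<Sum>b\<in>B. representation B (L b') b *s b)"
      by (rule sum_representation_eq[symmetric]) (use iB Lb' fB in auto)
    hence "representation B' (L b') = representation B' (\<Sum>b\<in>B. representation B (L b') b *s b)" by (rule arg_cong[of _ _ "representation B'"])
    also have "\<dots> = (\<lambda>x. \<Sum>b\<in>B. representation B' (representation B (L b') b *s b) x)"
      by (rule representation_sum[OF iB']) (use Bsp' span_scale in auto)
    also have "\<dots> = (\<lambda>x. \<Sum>b\<in>B. representation B (L b') b * representation B' b x)"
      using representation_scale[OF iB'] Bsp' by auto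
    finally show "(\<Sum>b\<in>B. representation B (L b') b * representation B' b b') = representation B' (L b') b'"
      by simp
  qed
  finally show ?thesis .
qed

lemma quot_trace_gen:
  fixes L :: "'b \<Rightarrow> 'b"
  assumes fin: "finite B0" and iB0: "independent B0" and sub: "BK0 \<subseteq> B0"
    and spK: "span BK0 = K" and spW: "span B0 = W"
    and add: "\<And>x y. L (x + y) = L x + L y" and sc: "\<And>a x. L (a *s x) = a *s L x"
    and LW: "L ` W \<subseteq> W" and LK: "L ` K \<subseteq> K"
  shows "(let BK = (SOME B. B \<subseteq> K \<and> \<not> dependent B \<and> span B = K);
          B  = (SOME B. BK \<subseteq> B \<and> B \<subseteq> W \<and> \<not> dependent B \<and> span B = W)
      in (\<Sum>b \<in> B - BK. representation B (L b) b)) = (\<Sum>b \<in> B0 - BK0. representation B0 (L b) b)"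
proof -
  define BK where "BK = (SOME B. B \<subseteq> K \<and> \<not> dependent B \<and> span B = K)"
  define B where "B = (SOME B. BK \<subseteq> B \<and> B \<subseteq> W \<and> \<not> dependent B \<and> span B = W)"
  have iBK0: "independent BK0" using iB0 sub independent_mono by auto
  have "\<exists>B. B \<subseteq> K \<and> \<not> dependent B \<and> span B = K"
    using iBK0 spK span_superset by blast
  hence BK: "BK \<subseteq> K" "independent BK" "span BK = K" unfolding BK_def by (metis (mono_tags, lifting) someI_ex)+
  have KW: "K \<subseteq> W" using spK spW sub span_mono by auto
  obtain B' where B': "BK \<subseteq> B'" "B' \<subseteq> W" "independent B'" "W \<subseteq> span B'"
    using maximal_independent_subset_extend[of BK W] BK KW by blast
  have "span B' \<subseteq> W" using B'(2) spW by (metis span_mono span_span)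
  hence "\<exists>B. BK \<subseteq> B \<and> B \<subseteq> W \<and> \<not> dependent B \<and> span B = W" using B' by blast
  hence B: "BK \<subseteq> B" "B \<subseteq> W" "independent B" "span B = W"
    unfolding B_def by (metis (mono_tags, lifting) someI_ex)+
  have fB: "finite B" using independent_span_bound[OF fin B(3)] B(2) spW by auto
  have fBK: "finite BK" using fB B(1) finite_subset by auto
  have fBK0: "finite BK0" using fin sub finite_subset by auto
  have ext: "representation B (L b) = representation BK (L b)" if "b \<in> BK" for b
    by (rule representation_extend[OF B(3) _ B(1)]) (use that BK LK span_base in auto)
  have ext0: "representation B0 (L b) = representation BK0 (L b)" if "b \<in> BK0" for b
    by (rule representation_extend[OF iB0 _ sub]) (use that spK LK span_base in auto)
  have "(\<Sum>b \<in> B - BK. representation B (L b) b) = (\<Sum>b\<in>B. representation B (L b) b) - (\<Sum>b\<in>BK. representation BK (L b) b)"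
  proof -
    have "(\<Sum>b\<in>BK. representation B (L b) b) = (\<Sum>b\<in>BK. representation BK (L b) b)"
      by (rule sum.cong) (use ext in auto)
    thus ?thesis using sum_diff[OF fB B(1), of "\<lambda>b. representation B (L b) b"] by (simp only:)
  qed
  also have "(\<Sum>b\<in>B. representation B (L b) b) = (\<Sum>b\<in>B0. representation B0 (L b) b)"
    by (rule trace_indep[OF fB fin B(3) iB0 _ add sc]) (use B spW LW in auto)
  also have "(\<Sum>b\<in>BK. representation BK (L b) b) = (\<Sum>b\<in>BK0. representation BK0 (L b) b)"
    by (rule trace_indep[OF fBK fBK0 BK(2) iBK0 _ add sc]) (use BK spK LK in auto)
  also have "(\<Sum>b\<in>B0. representation B0 (L b) b) - (\<Sum>b\<in>BK0. representation BK0 (L b) b)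
     = (\<Sum>b \<in> B0 - BK0. representation B0 (L b) b)"
  proof -
    have "(\<Sum>b\<in>BK0. representation B0 (L b) b) = (\<Sum>b\<in>BK0. representation BK0 (L b) b)"
      by (rule sum.cong) (use ext0 in auto)
    thus ?thesis using sum_diff[OF fin sub, of "\<lambda>b. representation B0 (L b) b"] by (simp only:)
  qed
  finally show ?thesis unfolding BK_def[symmetric] B_def[symmetric] Let_def by simp
qed

end

lemma vs_tscale: "vector_space tscale"
  unfolding vector_space_def module_def by (auto simp: tscale_def fun_eq_iff algebra_simps)



locale fi = fixes C :: "('o, 'm) cat" assumes FI: "FI_type C"
begin

lemmas FIc = FI[unfolded FI_type_def]
lemma cat: "is_category C" using FIc by (rule conjunct1)

lemmas catc = cat[unfolded is_category_def]
lemma comp_in [intro, simp]: "f \<in> Hom C x y \<Longrightarrow> g \<in> Hom C y z \<Longrightarrow> Comp C g f \<in> Hom C x z"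
  using catc[THEN conjunct1] by blast

lemma assoc: "f \<in> Hom C w x \<Longrightarrow> g \<in> Hom C x y \<Longrightarrow> h \<in> Hom C y z \<Longrightarrow>
    Comp C h (Comp C g f) = Comp C (Comp C h g) f"
  using catc[THEN conjunct2, THEN conjunct1] by blast

lemma id_in [simp, intro]: "Id C x \<in> Hom C x x"
  using catc[THEN conjunct2, THEN conjunct2, THEN conjunct1] by blast

lemma id_l [simp]: "f \<in> Hom C x y \<Longrightarrow> Comp C (Id C y) f = f"
  using catc[THEN conjunct2, THEN conjunct2, THEN conjunct2, THEN conjunct1] by blast

lemma id_r [simp]: "f \<in> Hom C x y \<Longrightarrow> Comp C f (Id C x) = f"
  using catc[THEN conjunct2, THEN conjunct2, THEN conjunct2, THEN conjunct1] by blast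

lemma mono: "f \<in> Hom C x y \<Longrightarrow> g \<in> Hom C w x \<Longrightarrow> h \<in> Hom C w x \<Longrightarrow> Comp C f g = Comp C f h \<Longrightarrow> g = h"
  using FIc[THEN conjunct2, THEN conjunct2, THEN conjunct1] by blast

lemma aut: "Aut C x = Hom C x x"
  using FIc[THEN conjunct2, THEN conjunct2, THEN conjunct2, THEN conjunct1] by auto

lemma finHom [simp]: "finite (Hom C x y)"
  using FIc[THEN conjunct2, THEN conjunct1] by auto

lemma trans: "f \<in> Hom C x y \<Longrightarrow> f' \<in> Hom C x y \<Longrightarrow> \<exists>s \<in> Hom C y y. f' = Comp C s f"
  using FIc[THEN conjunct2, THEN conjunct2, THEN conjunct2, THEN conjunct2, THEN conjunct1] aut by blast

lemma inv_ex: "f \<in> Hom C x x \<Longrightarrow> \<exists>g \<in> Hom C x x. Comp C g f = Id C x \<and> Comp C f g = Id C x"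
  using aut[of x] unfolding Aut_def by auto

lemma inv_unique:
  assumes f: "f \<in> Hom C x x" and g: "g \<in> Hom C x x" and g': "g' \<in> Hom C x x"
    and "Comp C g f = Id C x" and "Comp C f g' = Id C x"
  shows "g = g'"
proof -
  have "g = Comp C g (Comp C f g')" using assms by simp
  also have "\<dots> = Comp C (Comp C g f) g'" using assoc[OF g' f g] by simp
  also have "\<dots> = g'" using assms by simp
  finally show ?thesis .
qed

lemma cinv:
  assumes f: "f \<in> Hom C x x"
  shows "cinv C x f \<in> Hom C x x" "Comp C (cinv C x f) f = Id C x" "Comp C f (cinv C x f) = Id C x"
proof -
  obtain g where g: "g \<in> Hom C x x" "Comp C g f = Id C x" "Comp C f g = Id C x" using inv_ex[OF f] by blast
  have "cinv C x f = g" unfolding cinv_def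
  proof (rule the_equality)
    show "g \<in> Hom C x x \<and> Comp C g f = Id C x \<and> Comp C f g = Id C x" using g by auto
    fix g' assume a: "g' \<in> Hom C x x \<and> Comp C g' f = Id C x \<and> Comp C f g' = Id C x"
    show "g' = g" using inv_unique[OF f conjunct1[OF a] g(1) conjunct1[OF conjunct2[OF a]] g(3)] by simp
  qed
  thus "cinv C x f \<in> Hom C x x" "Comp C (cinv C x f) f = Id C x" "Comp C f (cinv C x f) = Id C x"
    using g by auto
qed

lemma cinv_eq:
  assumes "f \<in> Hom C x x" "g \<in> Hom C x x" "Comp C g f = Id C x"
  shows "cinv C x f = g"
  using inv_unique[OF assms(1,2) cinv(1)[OF assms(1)] assms(3) cinv(3)[OF assms(1)]] by simp

lemma cinv_in [simp, intro]: "f \<in> Hom C x x \<Longrightarrow> cinv C x f \<in> Hom C x x"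
  using cinv by blast

lemma cinv_l [simp]: "f \<in> Hom C x x \<Longrightarrow> Comp C (cinv C x f) f = Id C x"
  using cinv by blast

lemma cinv_r [simp]: "f \<in> Hom C x x \<Longrightarrow> Comp C f (cinv C x f) = Id C x"
  using cinv by blast

lemma cinv_comp:
  assumes h: "h \<in> Hom C x x" and k: "k \<in> Hom C x x"
  shows "cinv C x (Comp C h k) = Comp C (cinv C x k) (cinv C x h)"
proof (rule cinv_eq)
  show "Comp C h k \<in> Hom C x x" "Comp C (cinv C x k) (cinv C x h) \<in> Hom C x x" using assms by auto
  have "Comp C (Comp C (cinv C x k) (cinv C x h)) (Comp C h k)
      = Comp C (cinv C x k) (Comp C (cinv C x h) (Comp C h k))"
    using assoc[of "Comp C h k" x x "cinv C x h" x "cinv C x k" x] assms by simp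
  also have "Comp C (cinv C x h) (Comp C h k) = Comp C (Comp C (cinv C x h) h) k"
    using assoc[of k x x h x "cinv C x h" x] assms by simp
  also have "\<dots> = k" using assms by simp
  finally show "Comp C (Comp C (cinv C x k) (cinv C x h)) (Comp C h k) = Id C x" using k by simp
qed

lemma cinv_cinv: "h \<in> Hom C x x \<Longrightarrow> cinv C x (cinv C x h) = h"
  by (rule cinv_eq) auto

end



locale fsetup = fi C for C :: "('o, 'm) cat" +
  fixes c d :: 'o and n :: nat and \<rho> :: "'m \<Rightarrow> nat \<Rightarrow> nat \<Rightarrow> complex" and \<sigma> :: 'm
  assumes rep: "is_matrep C c n \<rho>" and sig: "\<sigma> \<in> Hom C d d"
begin

definition orb where "orb f = (\<lambda>g. Comp C f g) ` Hom C c c"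
definition rp where "rp Ob = (SOME f. f \<in> Ob)"

lemma O_eq: "binom_set C c d = orb ` Hom C c d"
  by (simp add: binom_set_def orb_def aut)

lemma finO: "finite (binom_set C c d)" by (simp add: O_eq)

lemma orb_sub: "f \<in> Hom C c d \<Longrightarrow> orb f \<subseteq> Hom C c d"
  unfolding orb_def by auto

lemma orb_self: "f \<in> Hom C c d \<Longrightarrow> f \<in> orb f"
  unfolding orb_def using id_r[of f c d] id_in[of c] by (metis image_eqI)

lemma O2:
  assumes f: "f \<in> Hom C c d" and g: "g \<in> Hom C c c"
  shows "orb (Comp C f g) = orb f"
proof
  show "orb (Comp C f g) \<subseteq> orb f"
  proof
    fix x assume "x \<in> orb (Comp C f g)"
    then obtain h where h: "h \<in> Hom C c c" "x = Comp C (Comp C f g) h" unfolding orb_def by auto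
    hence "x = Comp C f (Comp C g h)" using assoc[of h c c g c f d] f g by simp
    thus "x \<in> orb f" unfolding orb_def using h g by auto
  qed
  show "orb f \<subseteq> orb (Comp C f g)"
  proof
    fix x assume "x \<in> orb f"
    then obtain h where h: "h \<in> Hom C c c" "x = Comp C f h" unfolding orb_def by auto
    have gi: "cinv C c g \<in> Hom C c c" using g by simp
    have "Comp C (Comp C f g) (Comp C (cinv C c g) h) = Comp C f (Comp C g (Comp C (cinv C c g) h))"
      using assoc[of "Comp C (cinv C c g) h" c c g c f d] f g h gi by simp
    also have "Comp C g (Comp C (cinv C c g) h) = Comp C (Comp C g (cinv C c g)) h"
      using assoc[of h c c "cinv C c g" c g c] g h gi by simp
    also have "\<dots> = h" using g h by simp
    finally have "x = Comp C (Comp C f g) (Comp C (cinv C c g) h)" using h by simp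
    thus "x \<in> orb (Comp C f g)" unfolding orb_def using h gi by auto
  qed
qed

lemma O1:
  assumes "Ob \<in> binom_set C c d"
  shows "rp Ob \<in> Ob" "rp Ob \<in> Hom C c d" "Ob = orb (rp Ob)"
proof -
  obtain f where f: "f \<in> Hom C c d" "Ob = orb f" using assms O_eq by auto
  have "f \<in> Ob" using f orb_self by auto
  thus r: "rp Ob \<in> Ob" unfolding rp_def by (rule someI)
  then obtain g where g: "g \<in> Hom C c c" "rp Ob = Comp C f g" using f unfolding orb_def by auto
  show "rp Ob \<in> Hom C c d" using g f by simp
  show "Ob = orb (rp Ob)" using g f O2 by simp
qed

lemma X:
  assumes f: "f \<in> Hom C c d"
  shows "\<exists>Ob \<in> binom_set C c d. \<exists>g \<in> Hom C c c. f = Comp C (rp Ob) g"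
proof -
  have Ob: "orb f \<in> binom_set C c d" using f O_eq by auto
  have "f \<in> orb (rp (orb f))" using O1(3)[OF Ob] orb_self[OF f] by simp
  thus ?thesis using Ob unfolding orb_def by auto
qed

lemma U:
  assumes Ob: "Ob \<in> binom_set C c d" and Ob': "Ob' \<in> binom_set C c d"
    and g: "g \<in> Hom C c c" and g': "g' \<in> Hom C c c"
    and eq: "Comp C (rp Ob) g = Comp C (rp Ob') g'"
  shows "Ob = Ob'" "g = g'"
proof -
  have "Ob = orb (Comp C (rp Ob) g)" using O1[OF Ob] O2 g by simp
  also have "\<dots> = orb (Comp C (rp Ob') g')" using eq by simp
  also have "\<dots> = Ob'" using O1[OF Ob'] O2 g' by simp
  finally show "Ob = Ob'" .
  thus "g = g'" using mono[of "rp Ob" c d g c g'] O1[OF Ob] g g' eq by simp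
qed

lemma rp_inj:
  assumes "Ob \<in> binom_set C c d" "Ob' \<in> binom_set C c d" "rp Ob = rp Ob'"
  shows "Ob = Ob'"
  using U(1)[OF assms(1,2) id_in id_in] assms O1 by simp

end


context fsetup begin

declare comp_in[simp del]

lemma compG [simp]: "a \<in> Hom C c c \<Longrightarrow> b \<in> Hom C c c \<Longrightarrow> Comp C a b \<in> Hom C c c"
  by (rule comp_in)
lemma compH [simp]: "r \<in> Hom C c d \<Longrightarrow> b \<in> Hom C c c \<Longrightarrow> Comp C r b \<in> Hom C c d"
  by (rule comp_in)
lemma compS [simp]: "r \<in> Hom C c d \<Longrightarrow> Comp C \<sigma> r \<in> Hom C c d"
  by (rule comp_in[OF _ sig])
lemma cinvS [simp]: "cinv C d \<sigma> \<in> Hom C d d" using sig by simp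
lemma compSi [simp]: "r \<in> Hom C c d \<Longrightarrow> Comp C (cinv C d \<sigma>) r \<in> Hom C c d"
  by (rule comp_in[OF _ cinvS])

lemma assocG [simp]: "a \<in> Hom C c c \<Longrightarrow> b \<in> Hom C c c \<Longrightarrow> e \<in> Hom C c c \<Longrightarrow>
   Comp C a (Comp C b e) = Comp C (Comp C a b) e"
  using assoc[of e c c b c a c] by simp
lemma assocH [simp]: "r \<in> Hom C c d \<Longrightarrow> b \<in> Hom C c c \<Longrightarrow> e \<in> Hom C c c \<Longrightarrow>
   Comp C r (Comp C b e) = Comp C (Comp C r b) e"
  using assoc[of e c c b c r d] by simp
lemma assocS [simp]: "r \<in> Hom C c d \<Longrightarrow> b \<in> Hom C c c \<Longrightarrow>
   Comp C \<sigma> (Comp C r b) = Comp C (Comp C \<sigma> r) b"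
  using assoc[of b c c r d \<sigma> d] sig by simp
lemma assocSi [simp]: "r \<in> Hom C c d \<Longrightarrow>
   Comp C (cinv C d \<sigma>) (Comp C \<sigma> r) = r"
  using assoc[of r c d \<sigma> d "cinv C d \<sigma>" d] sig by simp
lemma assocSi' [simp]: "r \<in> Hom C c d \<Longrightarrow>
   Comp C \<sigma> (Comp C (cinv C d \<sigma>) r) = r"
  using assoc[of r c d "cinv C d \<sigma>" d \<sigma> d] sig by simp
lemma cancelG1 [simp]: "x \<in> Hom C c d \<Longrightarrow> h \<in> Hom C c c \<Longrightarrow> Comp C (Comp C x (cinv C c h)) h = x"
  using assoc[of h c c "cinv C c h" c x d] by simp
lemma cancelG2 [simp]: "x \<in> Hom C c d \<Longrightarrow> h \<in> Hom C c c \<Longrightarrow> Comp C (Comp C x h) (cinv C c h) = x"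
  using assoc[of "cinv C c h" c c h c x d] by simp
lemma cancelG1' [simp]: "x \<in> Hom C c c \<Longrightarrow> h \<in> Hom C c c \<Longrightarrow> Comp C (Comp C x (cinv C c h)) h = x"
  using assoc[of h c c "cinv C c h" c x c] by simp
lemma cancelG2' [simp]: "x \<in> Hom C c c \<Longrightarrow> h \<in> Hom C c c \<Longrightarrow> Comp C (Comp C x h) (cinv C c h) = x"
  using assoc[of "cinv C c h" c c h c x c] by simp

lemma cinv_id [simp]: "cinv C c (Id C c) = Id C c"
  using id_l[of "Id C c" c c] by (intro cinv_eq) auto

definition cls where "cls a = {Comp C (Comp C h a) (cinv C c h) | h. h \<in> Hom C c c}"

lemma CC_eq: "conj_classes C c = cls ` Hom C c c"
  unfolding conj_classes_def cls_def aut by simp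

lemma cls_sub: "a \<in> Hom C c c \<Longrightarrow> cls a \<subseteq> Hom C c c"
  unfolding cls_def by auto

lemma cls_self: "a \<in> Hom C c c \<Longrightarrow> a \<in> cls a"
  unfolding cls_def by (rule CollectI, rule exI[of _ "Id C c"]) simp

lemma cls_eq:
  assumes a: "a \<in> Hom C c c" and x: "x \<in> cls a"
  shows "cls x = cls a"
proof -
  obtain k where k: "k \<in> Hom C c c" "x = Comp C (Comp C k a) (cinv C c k)" using x unfolding cls_def by auto
  have xG: "x \<in> Hom C c c" using k a by simp
  show ?thesis
  proof
    show "cls x \<subseteq> cls a"
    proof
      fix y assume "y \<in> cls x"
      then obtain h where h: "h \<in> Hom C c c" "y = Comp C (Comp C h x) (cinv C c h)" unfolding cls_def by auto
      have "y = Comp C (Comp C (Comp C h k) a) (cinv C c (Comp C h k))"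
        using h k a by (simp add: cinv_comp)
      thus "y \<in> cls a" unfolding cls_def using h k by auto
    qed
    show "cls a \<subseteq> cls x"
    proof
      fix y assume "y \<in> cls a"
      then obtain h where h: "h \<in> Hom C c c" "y = Comp C (Comp C h a) (cinv C c h)" unfolding cls_def by auto
      have "y = Comp C (Comp C (Comp C h (cinv C c k)) x) (cinv C c (Comp C h (cinv C c k)))"
        using h k a by (simp add: cinv_comp cinv_cinv)
      thus "y \<in> cls x" unfolding cls_def using h k by auto
    qed
  qed
qed

lemma rep_mult: "g \<in> Hom C c c \<Longrightarrow> h \<in> Hom C c c \<Longrightarrow> i < n \<Longrightarrow> j < n \<Longrightarrow>
   \<rho> (Comp C g h) i j = (\<Sum>k<n. \<rho> g i k * \<rho> h k j)"
  using rep aut unfolding is_matrep_def by blast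

lemma rep_id: "i < n \<Longrightarrow> j < n \<Longrightarrow> \<rho> (Id C c) i j = (if i = j then 1 else 0)"
  using rep unfolding is_matrep_def by blast

lemma char_conj:
  assumes a: "a \<in> Hom C c c" and k: "k \<in> Hom C c c"
  shows "rep_char n \<rho> (Comp C (Comp C k a) (cinv C c k)) = rep_char n \<rho> a"
proof -
  have ki: "cinv C c k \<in> Hom C c c" using k by simp
  have "rep_char n \<rho> (Comp C (Comp C k a) (cinv C c k)) = (\<Sum>i<n. \<Sum>j<n. \<rho> (Comp C k a) i j * \<rho> (cinv C c k) j i)"
    unfolding rep_char_def using rep_mult[of "Comp C k a" "cinv C c k"] a k ki by simp
  also have "\<dots> = (\<Sum>j<n. \<Sum>i<n. \<rho> (cinv C c k) j i * \<rho> (Comp C k a) i j)"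
    by (subst sum.swap) (simp add: mult.commute)
  also have "\<dots> = (\<Sum>j<n. \<rho> (Comp C (cinv C c k) (Comp C k a)) j j)"
    using rep_mult[of "cinv C c k" "Comp C k a"] a k ki by simp
  also have "Comp C (cinv C c k) (Comp C k a) = a"
    using a k ki by simp
  finally show ?thesis unfolding rep_char_def by simp
qed

lemma class_val_cls:
  assumes a: "a \<in> Hom C c c"
  shows "class_val n \<rho> (cls a) = rep_char n \<rho> a"
proof -
  have "(SOME g. g \<in> cls a) \<in> cls a" using cls_self[OF a] by (rule someI)
  then obtain k where k: "k \<in> Hom C c c" "(SOME g. g \<in> cls a) = Comp C (Comp C k a) (cinv C c k)"
    unfolding cls_def by auto
  show ?thesis unfolding class_val_def k(2) using char_conj[OF a k(1)] by simp
qed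

end


context fsetup begin

definition dec where "dec Ob = (SOME p. fst p \<in> binom_set C c d \<and> snd p \<in> Hom C c c \<and>
   Comp C \<sigma> (rp Ob) = Comp C (rp (fst p)) (snd p))"

lemma dec:
  assumes Ob: "Ob \<in> binom_set C c d"
  shows "fst (dec Ob) \<in> binom_set C c d" "snd (dec Ob) \<in> Hom C c c"
    "Comp C \<sigma> (rp Ob) = Comp C (rp (fst (dec Ob))) (snd (dec Ob))"
proof -
  have "Comp C \<sigma> (rp Ob) \<in> Hom C c d" using O1(2)[OF Ob] by simp
  then obtain Ob' g where "Ob' \<in> binom_set C c d" "g \<in> Hom C c c" "Comp C \<sigma> (rp Ob) = Comp C (rp Ob') g"
    using X by blast
  hence "\<exists>p. fst p \<in> binom_set C c d \<and> snd p \<in> Hom C c c \<and>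
   Comp C \<sigma> (rp Ob) = Comp C (rp (fst p)) (snd p)" by (intro exI[of _ "(Ob', g)"]) simp
  from someI_ex[OF this] show "fst (dec Ob) \<in> binom_set C c d" "snd (dec Ob) \<in> Hom C c c"
    "Comp C \<sigma> (rp Ob) = Comp C (rp (fst (dec Ob))) (snd (dec Ob))" unfolding dec_def by blast+
qed

definition PP where "PP Ob \<mu> \<longleftrightarrow> (\<exists>f\<in>Ob. \<exists>\<psi>\<in>\<mu>. Comp C \<sigma> f = Comp C f \<psi>)"

lemma P_imp:
  assumes Ob: "Ob \<in> binom_set C c d" and mu: "\<mu> \<in> conj_classes C c" and P: "PP Ob \<mu>"
  shows "fst (dec Ob) = Ob" "snd (dec Ob) \<in> \<mu>"
proof -
  obtain a where a: "a \<in> Hom C c c" "\<mu> = cls a" using mu CC_eq by auto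
  obtain f \<psi> where f: "f \<in> Ob" and psi: "\<psi> \<in> \<mu>" and eq: "Comp C \<sigma> f = Comp C f \<psi>"
    using P unfolding PP_def by blast
  define r where "r = rp Ob"
  have r: "r \<in> Hom C c d" using O1[OF Ob] r_def by simp
  obtain g where g: "g \<in> Hom C c c" "f = Comp C r g" using f O1(3)[OF Ob] unfolding orb_def r_def by auto
  have psiG: "\<psi> \<in> Hom C c c" using psi a cls_sub by auto
  define h1 where "h1 = Comp C (Comp C g \<psi>) (cinv C c g)"
  have h1: "h1 \<in> Hom C c c" using g psiG h1_def by simp
  have "Comp C r h1 = Comp C (Comp C (Comp C r g) \<psi>) (cinv C c g)"
    unfolding h1_def using r g psiG by simp
  also have "Comp C (Comp C r g) \<psi> = Comp C (Comp C \<sigma> r) g"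
    using eq g r by simp
  also have "Comp C (Comp C (Comp C \<sigma> r) g) (cinv C c g) = Comp C \<sigma> r" using r g by simp
  finally have "Comp C r h1 = Comp C (rp (fst (dec Ob))) (snd (dec Ob))" using dec(3)[OF Ob] r_def by simp
  hence U1: "Ob = fst (dec Ob)" "h1 = snd (dec Ob)"
    using U[OF Ob dec(1)[OF Ob] h1 dec(2)[OF Ob]] r_def by auto
  thus "fst (dec Ob) = Ob" by simp
  have "h1 \<in> cls \<psi>" unfolding cls_def h1_def using g by auto
  also have "cls \<psi> = \<mu>" using cls_eq[OF a(1)] psi a by simp
  finally show "snd (dec Ob) \<in> \<mu>" using U1 by simp
qed

lemma fix_imp:
  assumes Ob: "Ob \<in> binom_set C c d" and fx: "fst (dec Ob) = Ob"
  shows "PP Ob (cls (snd (dec Ob)))"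
  unfolding PP_def using O1(1)[OF Ob] cls_self[OF dec(2)[OF Ob]] dec(3)[OF Ob] fx by auto

lemma finCC: "finite (conj_classes C c)" by (simp add: CC_eq)

lemma V_Ob:
  assumes Ob: "Ob \<in> binom_set C c d"
  shows "(\<Sum>\<mu>\<in>conj_classes C c. if PP Ob \<mu> then class_val n \<rho> \<mu> else 0)
       = (if fst (dec Ob) = Ob then rep_char n \<rho> (snd (dec Ob)) else 0)"
proof (cases "fst (dec Ob) = Ob")
  case True
  define h where "h = snd (dec Ob)"
  have h: "h \<in> Hom C c c" using dec(2)[OF Ob] h_def by simp
  have clsin: "cls h \<in> conj_classes C c" using h CC_eq by auto
  have "(\<Sum>\<mu>\<in>conj_classes C c. if PP Ob \<mu> then class_val n \<rho> \<mu> else 0)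
      = (if PP Ob (cls h) then class_val n \<rho> (cls h) else 0)"
  proof (rule sum_single_nz[OF finCC clsin])
    fix \<mu> assume mu: "\<mu> \<in> conj_classes C c" "\<mu> \<noteq> cls h"
    show "(if PP Ob \<mu> then class_val n \<rho> \<mu> else 0) = 0"
    proof (cases "PP Ob \<mu>")
      case True
      hence "h \<in> \<mu>" using P_imp[OF Ob mu(1)] h_def by simp
      moreover obtain a where "a \<in> Hom C c c" "\<mu> = cls a" using mu CC_eq by auto
      ultimately have "cls h = \<mu>" using cls_eq by simp
      thus ?thesis using mu by simp
    qed simp
  qed
  also have "\<dots> = rep_char n \<rho> h" using fix_imp[OF Ob True] h_def class_val_cls[OF h] by simp
  finally show ?thesis using True h_def by simp
next
  case False
  have "(\<Sum>\<mu>\<in>conj_classes C c. if PP Ob \<mu> then class_val n \<rho> \<mu> else 0) = 0"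
    using P_imp(1)[OF Ob] False by (intro sum.neutral) auto
  thus ?thesis using False by simp
qed

lemma RHS:
  "(\<Sum>\<mu>\<in>conj_classes C c. class_val n \<rho> \<mu> * of_nat (binomX C c \<mu> d \<sigma>))
   = (\<Sum>Ob\<in>binom_set C c d. if fst (dec Ob) = Ob then rep_char n \<rho> (snd (dec Ob)) else 0)"
proof -
  have card: "of_nat (binomX C c \<mu> d \<sigma>) = (\<Sum>Ob\<in>binom_set C c d. if PP Ob \<mu> then 1 else (0::complex))" for \<mu>
  proof -
    have "binomX C c \<mu> d \<sigma> = card {Ob \<in> binom_set C c d. PP Ob \<mu>}"
      unfolding binomX_def PP_def by simp
    also have "of_nat \<dots> = (\<Sum>Ob\<in>{Ob \<in> binom_set C c d. PP Ob \<mu>}. (1::complex))" by simp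
    also have "\<dots> = (\<Sum>Ob\<in>binom_set C c d. if PP Ob \<mu> then 1 else (0::complex))"
      by (rule sum.inter_filter[OF finO])
    finally show ?thesis .
  qed
  have "(\<Sum>\<mu>\<in>conj_classes C c. class_val n \<rho> \<mu> * of_nat (binomX C c \<mu> d \<sigma>))
      = (\<Sum>\<mu>\<in>conj_classes C c. \<Sum>Ob\<in>binom_set C c d. if PP Ob \<mu> then class_val n \<rho> \<mu> else 0)"
    unfolding card by (simp add: sum_distrib_left if_distrib cong: if_cong)
  also have "\<dots> = (\<Sum>Ob\<in>binom_set C c d. \<Sum>\<mu>\<in>conj_classes C c. if PP Ob \<mu> then class_val n \<rho> \<mu> else 0)"
    by (rule sum.swap)
  also have "\<dots> = (\<Sum>Ob\<in>binom_set C c d. if fst (dec Ob) = Ob then rep_char n \<rho> (snd (dec Ob)) else 0)"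
    by (rule sum.cong[OF refl]) (rule V_Ob)
  finally show ?thesis .
qed

end


interpretation tv: vector_space tscale by (rule vs_tscale)

lemma sum_delta_mult: "finite S \<Longrightarrow> (\<Sum>k\<in>S. a k * (if k = j then 1 else 0)) = (if j \<in> S then a j else (0::complex))"
proof -
  assume S: "finite S"
  have "(\<Sum>k\<in>S. a k * (if k = j then 1 else 0)) = (\<Sum>k\<in>S. if k = j then a k else 0)" by (rule sum.cong) auto
  thus ?thesis using sum.delta[OF S, of j a] by simp
qed

lemma tens_app: "tens n f v f' i = (if f' = f \<and> i < n then v i else 0)" by (simp add: tens_def)
lemma tscale_app: "tscale a F f' i = a * F f' i" by (simp add: tscale_def)
lemma sum_app: "(\<Sum>x\<in>A. F x) f' i = (\<Sum>x\<in>A. F x f' i)"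
  by (induct A rule: infinite_finite_induct) auto

context fsetup begin

definition u :: "nat \<Rightarrow> nat \<Rightarrow> complex" where "u i = (\<lambda>j. if j = i then 1 else 0)"
definition e where "e f i = tens n f (u i)"
definition kk where "kk f g i = tens n (Comp C f g) (u i) - tens n f (rep_act n \<rho> g (u i))"
definition BW where "BW = (\<lambda>(Ob, i). e (rp Ob) i) ` (binom_set C c d \<times> {..<n})"
definition BK where "BK = (\<lambda>(Ob, g, i). kk (rp Ob) g i) ` (binom_set C c d \<times> (Hom C c c - {Id C c}) \<times> {..<n})"
definition B0 where "B0 = BK \<union> BW"

lemma e_app: "e f j f' i = (if f' = f \<and> i < n \<and> i = j then 1 else 0)"
  unfolding e_def u_def by (simp add: tens_app)

lemma rep_act_u: "i < n \<Longrightarrow> j < n \<Longrightarrow> rep_act n \<rho> g (u j) i = \<rho> g i j"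
  unfolding rep_act_def u_def using sum_delta_mult[of "{..<n}" "\<lambda>k. \<rho> g i k" j] by simp

lemma kk_app: "kk f g j f' i = (if f' = Comp C f g \<and> i < n \<and> i = j then 1 else 0)
   - (if f' = f \<and> i < n then rep_act n \<rho> g (u j) i else 0)"
  unfolding kk_def u_def by (simp add: tens_app)

lemma notfix:
  assumes Ob: "Ob \<in> binom_set C c d" and Ob': "Ob' \<in> binom_set C c d"
    and g: "g \<in> Hom C c c" and gn: "g \<noteq> Id C c"
  shows "Comp C (rp Ob) g \<noteq> rp Ob'"
proof
  assume eq: "Comp C (rp Ob) g = rp Ob'"
  have "Comp C (rp Ob') (Id C c) = rp Ob'" using O1(2)[OF Ob'] by simp
  hence "Comp C (rp Ob) g = Comp C (rp Ob') (Id C c)" using eq by simp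
  hence "g = Id C c" using U(2)[OF Ob Ob' g id_in] by simp
  thus False using gn by simp
qed

lemma kk_val:
  assumes Ob: "Ob \<in> binom_set C c d" and g: "g \<in> Hom C c c" and gn: "g \<noteq> Id C c" and i: "i < n"
  shows "kk (rp Ob) g i (Comp C (rp Ob) g) i = 1"
  using notfix[OF Ob Ob g gn] i by (simp add: kk_app)

lemma B0_nz:
  assumes y: "y \<in> B0" and Ob: "Ob \<in> binom_set C c d" and g: "g \<in> Hom C c c" and gn: "g \<noteq> Id C c"
    and i: "i < n" and nz: "y (Comp C (rp Ob) g) i \<noteq> 0"
  shows "y = kk (rp Ob) g i"
proof -
  { assume "y \<in> BW"
    then obtain Ob' j where Ob': "Ob' \<in> binom_set C c d" and y: "y = e (rp Ob') j" unfolding BW_def by auto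
    have False using nz notfix[OF Ob Ob' g gn] unfolding y e_app by (auto split: if_splits)
  }
  moreover
  { assume "y \<in> BK"
    then obtain Ob' g' j where Ob': "Ob' \<in> binom_set C c d" and g': "g' \<in> Hom C c c" "g' \<noteq> Id C c"
      and y: "y = kk (rp Ob') g' j" unfolding BK_def by auto
    have ne: "Comp C (rp Ob) g \<noteq> rp Ob'" using notfix[OF Ob Ob' g gn] .
    have "Comp C (rp Ob) g = Comp C (rp Ob') g' \<and> i = j" using nz ne unfolding y kk_app by (auto split: if_splits)
    hence "Ob = Ob' \<and> g = g' \<and> i = j" using U[OF Ob Ob' g g'(1)] by auto
    hence "y = kk (rp Ob) g i" using y by simp
  }
  ultimately show ?thesis using y unfolding B0_def by blast
qed

lemma e_val: "i < n \<Longrightarrow> e f i f i = 1" by (simp add: e_app)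

lemma e_inj: "i < n \<Longrightarrow> e f i = e f' j \<Longrightarrow> f = f' \<and> i = j"
  using e_val[of i f] by (auto simp: e_app split: if_splits)

lemma disj: "BK \<inter> BW = {}"
proof (rule ccontr)
  assume "BK \<inter> BW \<noteq> {}"
  then obtain x where x: "x \<in> BK" "x \<in> BW" by blast
  then obtain Ob g i where Ob: "Ob \<in> binom_set C c d" and g: "g \<in> Hom C c c" "g \<noteq> Id C c" and i: "i < n"
    and xe: "x = kk (rp Ob) g i" unfolding BK_def by auto
  obtain Ob' j where Ob': "Ob' \<in> binom_set C c d" and xe': "x = e (rp Ob') j" using x unfolding BW_def by auto
  have "x (Comp C (rp Ob) g) i = 1" using kk_val[OF Ob g i] xe by simp
  moreover have "x (Comp C (rp Ob) g) i = 0" using notfix[OF Ob Ob' g] xe' by (simp add: e_app)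
  ultimately show False by simp
qed

lemma finBW: "finite BW" unfolding BW_def using finO by simp
lemma finBK: "finite BK" unfolding BK_def using finO by simp
lemma finB0: "finite B0" unfolding B0_def using finBW finBK by simp

lemma indep: "tv.independent B0"
proof (rule tv.independent_if_scalars_zero[OF finB0])
  fix a x assume S: "(\<Sum>x\<in>B0. tscale (a x) x) = 0" and x: "x \<in> B0"
  have Sapp: "(\<Sum>y\<in>B0. a y * y f' i) = 0" for f' i
  proof -
    have "(\<Sum>y\<in>B0. a y * y f' i) = (\<Sum>x\<in>B0. tscale (a x) x) f' i" by (simp add: sum_app tscale_app)
    thus ?thesis using S by simp
  qed
  have K0: "a y = 0" if y: "y \<in> BK" for y
  proof -
    obtain Ob g i where Ob: "Ob \<in> binom_set C c d" and g: "g \<in> Hom C c c" "g \<noteq> Id C c" and i: "i < n"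
      and ye: "y = kk (rp Ob) g i" using y unfolding BK_def by auto
    have yB: "y \<in> B0" using y B0_def by simp
    have "(\<Sum>z\<in>B0. a z * z (Comp C (rp Ob) g) i) = a y * y (Comp C (rp Ob) g) i"
      by (rule sum_single_nz[OF finB0 yB]) (use B0_nz[OF _ Ob g i] ye in auto)
    thus ?thesis using Sapp kk_val[OF Ob g i] ye by simp
  qed
  show "a x = 0"
  proof (cases "x \<in> BK")
    case True thus ?thesis using K0 by simp
  next
    case False
    hence "x \<in> BW" using x B0_def by simp
    then obtain Ob i where Ob: "Ob \<in> binom_set C c d" and i: "i < n" and xe: "x = e (rp Ob) i"
      unfolding BW_def by auto
    have "(\<Sum>z\<in>B0. a z * z (rp Ob) i) = a x * x (rp Ob) i"
    proof (rule sum_single_nz[OF finB0 x])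
      fix z assume z: "z \<in> B0" "z \<noteq> x"
      show "a z * z (rp Ob) i = 0"
      proof (cases "z \<in> BK")
        case True thus ?thesis using K0 by simp
      next
        case False
        hence "z \<in> BW" using z B0_def by simp
        then obtain Ob' j where ze: "z = e (rp Ob') j" unfolding BW_def by auto
        show ?thesis using z(2) unfolding ze xe by (auto simp: e_app)
      qed
    qed
    thus ?thesis using Sapp xe e_val[OF i, of "rp Ob"] by simp
  qed
qed

end


context fsetup begin

abbreviation "W \<equiv> tensor_space C c n d"
abbreviation "K \<equiv> balance_space C c n \<rho> d"
abbreviation "L \<equiv> post_act C c d \<sigma>"

lemma W_subspace: "tv.subspace W"
  unfolding tv.subspace_def tensor_space_def by (auto simp: tscale_def; metis add.left_neutral)

lemma tens_W: "f \<in> Hom C c d \<Longrightarrow> tens n f v \<in> W"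
  unfolding tensor_space_def by (auto simp: tens_app split: if_splits)

lemma tens_expand: "tens n f w = (\<Sum>j<n. tscale (w j) (e f j))"
proof (rule ext, rule ext)
  fix f' i
  show "tens n f w f' i = (\<Sum>j<n. tscale (w j) (e f j)) f' i"
  proof (cases "f' = f \<and> i < n")
    case True
    have "(\<Sum>j<n. tscale (w j) (e f j)) f' i = (\<Sum>j<n. w j * (if j = i then 1 else 0))"
      using True by (simp add: sum_app tscale_app e_app eq_commute[of i])
    also have "\<dots> = w i" using True sum_delta_mult[of "{..<n}" w i] by simp
    finally show ?thesis using True by (simp add: tens_app)
  next
    case False
    thus ?thesis by (auto simp: sum_app tscale_app e_app tens_app)
  qed
qed

lemma BW_B0: "BW \<subseteq> B0" and BK_B0: "BK \<subseteq> B0" unfolding B0_def by auto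

lemma eBW: "Ob \<in> binom_set C c d \<Longrightarrow> j < n \<Longrightarrow> e (rp Ob) j \<in> BW"
  unfolding BW_def by auto

lemma kkBK: "Ob \<in> binom_set C c d \<Longrightarrow> g \<in> Hom C c c \<Longrightarrow> g \<noteq> Id C c \<Longrightarrow> j < n \<Longrightarrow> kk (rp Ob) g j \<in> BK"
  unfolding BK_def by force

lemma tens_rp_span: "Ob \<in> binom_set C c d \<Longrightarrow> tens n (rp Ob) w \<in> tv.span B0"
  unfolding tens_expand
  by (intro tv.span_sum tv.span_scale tv.span_base) (use eBW BW_B0 in auto)

lemma e_span:
  assumes f: "f \<in> Hom C c d" and i: "i < n"
  shows "e f i \<in> tv.span B0"
proof -
  obtain Ob h where Ob: "Ob \<in> binom_set C c d" and h: "h \<in> Hom C c c" and fe: "f = Comp C (rp Ob) h"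
    using X[OF f] by blast
  show ?thesis
  proof (cases "h = Id C c")
    case True
    hence "f = rp Ob" using fe O1(2)[OF Ob] by simp
    thus ?thesis using eBW[OF Ob i] BW_B0 tv.span_base by auto
  next
    case False
    have "e f i = kk (rp Ob) h i + tens n (rp Ob) (rep_act n \<rho> h (u i))"
      unfolding kk_def e_def fe by simp
    moreover have "kk (rp Ob) h i \<in> tv.span B0" using kkBK[OF Ob h False i] BK_B0 tv.span_base by auto
    ultimately show ?thesis using tv.span_add[OF _ tens_rp_span[OF Ob]] by metis
  qed
qed

lemma tens_span: "f \<in> Hom C c d \<Longrightarrow> tens n f w \<in> tv.span B0"
  unfolding tens_expand by (intro tv.span_sum tv.span_scale e_span) auto

lemma B0_W: "B0 \<subseteq> W"
proof
  fix x assume "x \<in> B0"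
  then consider (a) "x \<in> BK" | (b) "x \<in> BW" unfolding B0_def by blast
  thus "x \<in> W"
  proof cases
    case a
    then obtain Ob g i where Ob: "Ob \<in> binom_set C c d" and g: "g \<in> Hom C c c" and xe: "x = kk (rp Ob) g i"
      unfolding BK_def by auto
    show ?thesis unfolding xe kk_def using O1(2)[OF Ob] g
      by (intro tv.subspace_diff[OF W_subspace] tens_W) auto
  next
    case b
    then obtain Ob i where Ob: "Ob \<in> binom_set C c d" and xe: "x = e (rp Ob) i" unfolding BW_def by auto
    show ?thesis unfolding xe e_def using O1(2)[OF Ob] by (intro tens_W)
  qed
qed

lemma spanW: "tv.span B0 = W"
proof
  show "tv.span B0 \<subseteq> W" using tv.span_minimal[OF B0_W W_subspace] .
  show "W \<subseteq> tv.span B0"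
  proof
    fix F assume F: "F \<in> W"
    have "F = (\<Sum>f\<in>Hom C c d. tens n f (F f))"
    proof (rule ext, rule ext)
      fix f' i
      have "(\<Sum>f\<in>Hom C c d. tens n f (F f)) f' i = (\<Sum>f\<in>Hom C c d. if f' = f then (if i < n then F f i else 0) else 0)"
        by (simp add: sum_app tens_app)
      also have "\<dots> = (if f' \<in> Hom C c d then (if i < n then F f' i else 0) else 0)"
        by (rule sum.delta') simp
      also have "\<dots> = F f' i" using F unfolding tensor_space_def by auto
      finally show "F f' i = (\<Sum>f\<in>Hom C c d. tens n f (F f)) f' i" by simp
    qed
    also have "\<dots> \<in> tv.span B0" by (intro tv.span_sum tens_span)
    finally show "F \<in> tv.span B0" .
  qed
qed

end


context fsetup begin

definition Gen where "Gen = {(\<lambda>f' i. tens n (Comp C f g) v f' i - tens n f (rep_act n \<rho> g v) f' i) | f g v.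
        f \<in> Hom C c d \<and> g \<in> Aut C c}"

lemma K_eq: "K = tv.span Gen" unfolding balance_space_def Gen_def by simp

lemma Gen_form: "(\<lambda>f' i. tens n (Comp C f g) v f' i - tens n f (rep_act n \<rho> g v) f' i)
   = tens n (Comp C f g) v - tens n f (rep_act n \<rho> g v)"
  by (simp add: fun_eq_iff)

lemma rep_act_comp:
  assumes h: "h \<in> Hom C c c" and g: "g \<in> Hom C c c" and i: "i < n"
  shows "rep_act n \<rho> (Comp C h g) v i = rep_act n \<rho> h (rep_act n \<rho> g v) i"
proof -
  have "rep_act n \<rho> (Comp C h g) v i = (\<Sum>j<n. (\<Sum>k<n. \<rho> h i k * \<rho> g k j) * v j)"
    unfolding rep_act_def using i rep_mult[OF h g i] by simp
  also have "\<dots> = (\<Sum>k<n. \<Sum>j<n. \<rho> h i k * (\<rho> g k j * v j))"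
    by (simp add: sum_distrib_right sum_distrib_left mult.assoc) (rule sum.swap)
  also have "\<dots> = (\<Sum>k<n. \<rho> h i k * rep_act n \<rho> g v k)"
    by (rule sum.cong[OF refl]) (simp add: rep_act_def sum_distrib_left)
  also have "\<dots> = rep_act n \<rho> h (rep_act n \<rho> g v) i" unfolding rep_act_def[of n \<rho> h] using i by simp
  finally show ?thesis .
qed

lemma kv_span:
  assumes Ob: "Ob \<in> binom_set C c d" and h: "h \<in> Hom C c c"
  shows "tens n (Comp C (rp Ob) h) w - tens n (rp Ob) (rep_act n \<rho> h w) \<in> tv.span BK"
proof (cases "h = Id C c")
  case True
  have r: "rp Ob \<in> Hom C c d" using O1(2)[OF Ob] .
  have "tens n (Comp C (rp Ob) h) w - tens n (rp Ob) (rep_act n \<rho> h w) = 0"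
  proof (rule ext, rule ext)
    fix f' i
    have "i < n \<Longrightarrow> rep_act n \<rho> (Id C c) w i = w i"
      unfolding rep_act_def using rep_id sum_delta_mult[of "{..<n}" w i]
      by (simp add: eq_commute[of i] mult.commute)
    thus "(tens n (Comp C (rp Ob) h) w - tens n (rp Ob) (rep_act n \<rho> h w)) f' i = 0 f' i"
      using True r by (simp add: tens_app)
  qed
  thus ?thesis using tv.span_zero by simp
next
  case False
  have "tens n (Comp C (rp Ob) h) w - tens n (rp Ob) (rep_act n \<rho> h w) = (\<Sum>j<n. tscale (w j) (kk (rp Ob) h j))"
  proof (rule ext, rule ext)
    fix f' i
    have A: "(\<Sum>j<n. w j * (if f' = Comp C (rp Ob) h \<and> i < n \<and> i = j then 1 else 0))
       = (if f' = Comp C (rp Ob) h \<and> i < n then w i else 0)"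
      using sum_delta_mult[of "{..<n}" w i] by (auto simp: eq_commute[of i])
    have B: "(\<Sum>j<n. w j * (if f' = rp Ob \<and> i < n then rep_act n \<rho> h (u j) i else 0))
       = (if f' = rp Ob \<and> i < n then rep_act n \<rho> h w i else 0)"
    proof (cases "f' = rp Ob \<and> i < n")
      case True
      have "(\<Sum>j<n. w j * rep_act n \<rho> h (u j) i) = (\<Sum>j<n. \<rho> h i j * w j)"
        by (rule sum.cong[OF refl]) (use True rep_act_u in auto)
      thus ?thesis using True by (simp add: rep_act_def)
    next
      case False
      hence "\<And>j. (if f' = rp Ob \<and> i < n then rep_act n \<rho> h (u j) i else 0) = 0" by (simp only: if_False)
      moreover have "(if f' = rp Ob \<and> i < n then rep_act n \<rho> h w i else 0) = 0" using False by (simp only: if_False)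
      ultimately show ?thesis by (simp only: mult_zero_right sum.neutral_const)
    qed
    show "(tens n (Comp C (rp Ob) h) w - tens n (rp Ob) (rep_act n \<rho> h w)) f' i
       = (\<Sum>j<n. tscale (w j) (kk (rp Ob) h j)) f' i"
      by (simp add: sum_app tscale_app kk_app right_diff_distrib sum_subtractf A B tens_app)
  qed
  also have "\<dots> \<in> tv.span BK"
    by (intro tv.span_sum tv.span_scale tv.span_base kkBK[OF Ob h False]) auto
  finally show ?thesis .
qed

lemma Gen_span: "Gen \<subseteq> tv.span BK"
proof
  fix x assume "x \<in> Gen"
  then obtain f g v where f: "f \<in> Hom C c d" and g: "g \<in> Hom C c c"
    and x: "x = tens n (Comp C f g) v - tens n f (rep_act n \<rho> g v)"
    unfolding Gen_def Gen_form aut by blast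
  obtain Ob h where Ob: "Ob \<in> binom_set C c d" and h: "h \<in> Hom C c c" and fe: "f = Comp C (rp Ob) h"
    using X[OF f] by blast
  have r: "rp Ob \<in> Hom C c d" using O1(2)[OF Ob] .
  have "x = (tens n (Comp C (rp Ob) (Comp C h g)) v - tens n (rp Ob) (rep_act n \<rho> (Comp C h g) v))
      - (tens n (Comp C (rp Ob) h) (rep_act n \<rho> g v) - tens n (rp Ob) (rep_act n \<rho> h (rep_act n \<rho> g v)))"
  proof (rule ext, rule ext)
    fix f' i
    show "x f' i = ((tens n (Comp C (rp Ob) (Comp C h g)) v - tens n (rp Ob) (rep_act n \<rho> (Comp C h g) v))
      - (tens n (Comp C (rp Ob) h) (rep_act n \<rho> g v) - tens n (rp Ob) (rep_act n \<rho> h (rep_act n \<rho> g v)))) f' i"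
      unfolding x fe using rep_act_comp[OF h g, of i v] r h g by (simp add: tens_app)
  qed
  also have "\<dots> \<in> tv.span BK"
    by (rule tv.span_diff[OF kv_span[OF Ob compG[OF h g]] kv_span[OF Ob h]])
  finally show "x \<in> tv.span BK" .
qed

lemma spanK: "tv.span BK = K"
proof
  show "tv.span BK \<subseteq> K"
  proof (rule tv.span_minimal)
    show "tv.subspace K" unfolding K_eq by simp
    show "BK \<subseteq> K"
    proof
      fix x assume "x \<in> BK"
      then obtain Ob g i where Ob: "Ob \<in> binom_set C c d" and g: "g \<in> Hom C c c" and xe: "x = kk (rp Ob) g i"
        unfolding BK_def by auto
      have "x \<in> Gen" unfolding Gen_def Gen_form xe kk_def aut using O1(2)[OF Ob] g by blast
      thus "x \<in> K" unfolding K_eq by (rule tv.span_base)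
    qed
  qed
  show "K \<subseteq> tv.span BK" unfolding K_eq by (rule tv.span_minimal[OF Gen_span]) simp
qed

lemma L_add: "L (x + y) = L x + L y" by (simp add: post_act_def fun_eq_iff)
lemma L_sc: "L (tscale a x) = tscale a (L x)" by (simp add: post_act_def fun_eq_iff tscale_def)
lemma L_diff: "L (x - y) = L x - L y" by (simp add: post_act_def fun_eq_iff)

lemma L_tens:
  assumes f: "f \<in> Hom C c d"
  shows "L (tens n f v) = tens n (Comp C \<sigma> f) v"
proof (rule ext, rule ext)
  fix f' i
  have "f' \<in> Hom C c d \<and> Comp C (cinv C d \<sigma>) f' = f \<longleftrightarrow> f' = Comp C \<sigma> f"
  proof
    assume a: "f' \<in> Hom C c d \<and> Comp C (cinv C d \<sigma>) f' = f"
    thus "f' = Comp C \<sigma> f" using assocSi'[of f'] by metis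
  next
    assume "f' = Comp C \<sigma> f" thus "f' \<in> Hom C c d \<and> Comp C (cinv C d \<sigma>) f' = f" using f by simp
  qed
  thus "L (tens n f v) f' i = tens n (Comp C \<sigma> f) v f' i"
    unfolding post_act_def tens_app by auto
qed

lemma L_W: "L ` W \<subseteq> W"
  unfolding tensor_space_def post_act_def by (auto split: if_splits)

lemma L_K: "L ` K \<subseteq> K"
proof -
  have mh: "module_hom tscale tscale L"
    unfolding module_hom_iff using vs_tscale L_add L_sc by (auto simp: module_iff_vector_space)
  have "L ` Gen \<subseteq> Gen"
  proof
    fix y assume "y \<in> L ` Gen"
    then obtain f g v where f: "f \<in> Hom C c d" and g: "g \<in> Hom C c c"
      and y: "y = L (tens n (Comp C f g) v - tens n f (rep_act n \<rho> g v))"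
      unfolding Gen_def Gen_form aut by blast
    have "y = tens n (Comp C (Comp C \<sigma> f) g) v - tens n (Comp C \<sigma> f) (rep_act n \<rho> g v)"
      unfolding y L_diff using L_tens f g by simp
    thus "y \<in> Gen" unfolding Gen_def Gen_form aut using f g compS[OF f] by blast
  qed
  hence "tv.span (L ` Gen) \<subseteq> K" unfolding K_eq by (rule tv.span_mono)
  thus ?thesis unfolding K_eq module_hom.span_image[OF mh] by simp
qed

end


context fsetup begin

lemma kk_id: "r \<in> Hom C c d \<Longrightarrow> kk r (Id C c) i = 0"
proof (rule ext, rule ext)
  fix f' j assume r: "r \<in> Hom C c d"
  have "j < n \<Longrightarrow> rep_act n \<rho> (Id C c) (u i) j = u i j"
    unfolding rep_act_def using rep_id sum_delta_mult[of "{..<n}" "u i" j]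
    by (simp add: eq_commute[of j] mult.commute)
  thus "kk r (Id C c) i f' j = 0 f' j" unfolding kk_def using r by (simp add: tens_app)
qed

lemma B0_span: "x \<in> B0 \<Longrightarrow> x \<in> tv.span B0" by (rule tv.span_base)

lemma trace_term:
  assumes Ob: "Ob \<in> binom_set C c d" and i: "i < n"
  shows "tv.representation B0 (L (e (rp Ob) i)) (e (rp Ob) i)
       = (if fst (dec Ob) = Ob then \<rho> (snd (dec Ob)) i i else 0)"
proof -
  define Ob' where "Ob' = fst (dec Ob)"
  define h where "h = snd (dec Ob)"
  have Ob': "Ob' \<in> binom_set C c d" using dec(1)[OF Ob] Ob'_def by simp
  have h: "h \<in> Hom C c c" using dec(2)[OF Ob] h_def by simp
  have r: "rp Ob \<in> Hom C c d" using O1(2)[OF Ob] .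
  have r': "rp Ob' \<in> Hom C c d" using O1(2)[OF Ob'] .
  define x where "x = e (rp Ob) i"
  have xBW: "x \<in> BW" using eBW[OF Ob i] x_def by simp
  have "L x = tens n (Comp C \<sigma> (rp Ob)) (u i)" unfolding x_def e_def using L_tens[OF r] by simp
  also have "\<dots> = tens n (Comp C (rp Ob') h) (u i)" using dec(3)[OF Ob] Ob'_def h_def by simp
  also have "\<dots> = kk (rp Ob') h i + (\<Sum>j<n. tscale (rep_act n \<rho> h (u i) j) (e (rp Ob') j))"
    unfolding kk_def tens_expand[symmetric] by simp
  finally have Lx: "L x = kk (rp Ob') h i + (\<Sum>j<n. tscale (rep_act n \<rho> h (u i) j) (e (rp Ob') j))" .
  have kkspan: "kk (rp Ob') h i \<in> tv.span B0"
  proof (cases "h = Id C c")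
    case True thus ?thesis using kk_id[OF r'] tv.span_zero by simp
  next
    case False thus ?thesis using kkBK[OF Ob' h False i] BK_B0 B0_span by auto
  qed
  have espan: "e (rp Ob') j \<in> tv.span B0" if "j < n" for j
    using eBW[OF Ob' that] BW_B0 B0_span by auto
  have sspan: "(\<Sum>j<n. tscale (rep_act n \<rho> h (u i) j) (e (rp Ob') j)) \<in> tv.span B0"
    by (intro tv.span_sum tv.span_scale espan) auto
  have kk0: "tv.representation B0 (kk (rp Ob') h i) x = 0"
  proof (cases "h = Id C c")
    case True
    have z: "tv.representation B0 0 = (\<lambda>b. 0)" by (rule tv.representation_zero)
    show ?thesis using kk_id[OF r'] True z by simp
  next
    case False
    have kB: "kk (rp Ob') h i \<in> B0" using kkBK[OF Ob' h False i] BK_B0 by auto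
    have "x \<noteq> kk (rp Ob') h i" using kkBK[OF Ob' h False i] xBW disj by auto
    thus ?thesis using tv.representation_basis[OF indep kB] by simp
  qed
  have "tv.representation B0 (\<Sum>j<n. tscale (rep_act n \<rho> h (u i) j) (e (rp Ob') j)) x
      = (\<Sum>j<n. tv.representation B0 (tscale (rep_act n \<rho> h (u i) j) (e (rp Ob') j)) x)"
  proof -
    have R: "tv.representation B0 (\<Sum>j<n. tscale (rep_act n \<rho> h (u i) j) (e (rp Ob') j))
      = (\<lambda>b. \<Sum>j<n. tv.representation B0 (tscale (rep_act n \<rho> h (u i) j) (e (rp Ob') j)) b)"
      by (rule tv.representation_sum[OF indep]) (use espan tv.span_scale in auto)
    show ?thesis unfolding R by simp
  qed
  also have "\<dots> = (\<Sum>j<n. \<rho> h j i * (if x = e (rp Ob') j then 1 else 0))"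
  proof (rule sum.cong[OF refl])
    fix j assume j: "j \<in> {..<n}"
    have eB: "e (rp Ob') j \<in> B0" using eBW[OF Ob'] BW_B0 j by auto
    show "tv.representation B0 (tscale (rep_act n \<rho> h (u i) j) (e (rp Ob') j)) x
        = \<rho> h j i * (if x = e (rp Ob') j then 1 else 0)"
      using tv.representation_scale[OF indep espan, of j "rep_act n \<rho> h (u i) j"] j i
        tv.representation_basis[OF indep eB] rep_act_u by simp
  qed
  also have "\<dots> = (\<Sum>j<n. \<rho> h j i * (if j = i then (if Ob' = Ob then 1 else 0) else 0))"
  proof (rule sum.cong[OF refl])
    fix j assume j: "j \<in> {..<n}"
    have "(x = e (rp Ob') j) \<longleftrightarrow> (j = i \<and> Ob' = Ob)"
      using e_inj[OF i, of "rp Ob" "rp Ob'" j] rp_inj[OF Ob Ob'] unfolding x_def by auto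
    thus "\<rho> h j i * (if x = e (rp Ob') j then 1 else 0) = \<rho> h j i * (if j = i then (if Ob' = Ob then 1 else 0) else 0)"
      by auto
  qed
  also have "\<dots> = (if Ob' = Ob then \<rho> h i i else 0)"
    using sum_delta_mult[of "{..<n}" "\<lambda>j. \<rho> h j i" i] i by (cases "Ob' = Ob") simp_all
  finally have S: "tv.representation B0 (\<Sum>j<n. tscale (rep_act n \<rho> h (u i) j) (e (rp Ob') j)) x
      = (if Ob' = Ob then \<rho> h i i else 0)" .
  have "tv.representation B0 (L x) x = tv.representation B0 (kk (rp Ob') h i) x
      + tv.representation B0 (\<Sum>j<n. tscale (rep_act n \<rho> h (u i) j) (e (rp Ob') j)) x"
    unfolding Lx using tv.representation_add[OF indep sspan kkspan] by simp
  thus ?thesis using kk0 S x_def Ob'_def h_def by simp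
qed

lemma trace_BW:
  "(\<Sum>b\<in>B0 - BK. tv.representation B0 (L b) b)
   = (\<Sum>Ob\<in>binom_set C c d. if fst (dec Ob) = Ob then rep_char n \<rho> (snd (dec Ob)) else 0)"
proof -
  have "B0 - BK = BW" unfolding B0_def using disj by auto
  hence "(\<Sum>b\<in>B0 - BK. tv.representation B0 (L b) b) = (\<Sum>b\<in>BW. tv.representation B0 (L b) b)" by simp
  also have "\<dots> = (\<Sum>p\<in>binom_set C c d \<times> {..<n}. tv.representation B0 (L (e (rp (fst p)) (snd p))) (e (rp (fst p)) (snd p)))"
  proof -
    have inj: "inj_on (\<lambda>(Ob, i). e (rp Ob) i) (binom_set C c d \<times> {..<n})"
    proof (rule inj_onI, clarify)
      fix Ob i Ob' j assume a: "Ob \<in> binom_set C c d" "i < n" "Ob' \<in> binom_set C c d" "j < n"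
        "e (rp Ob) i = e (rp Ob') j"
      thus "Ob = Ob' \<and> i = j" using e_inj[OF a(2) a(5)] rp_inj[OF a(1) a(3)] by auto
    qed
    show ?thesis unfolding BW_def by (subst sum.reindex[OF inj]) (simp add: case_prod_beta)
  qed
  also have "\<dots> = (\<Sum>Ob\<in>binom_set C c d. \<Sum>i<n. tv.representation B0 (L (e (rp Ob) i)) (e (rp Ob) i))"
    by (simp add: sum.cartesian_product case_prod_beta)
  also have "\<dots> = (\<Sum>Ob\<in>binom_set C c d. \<Sum>i<n. if fst (dec Ob) = Ob then \<rho> (snd (dec Ob)) i i else 0)"
    by (intro sum.cong[OF refl]) (simp add: trace_term)
  also have "\<dots> = (\<Sum>Ob\<in>binom_set C c d. if fst (dec Ob) = Ob then rep_char n \<rho> (snd (dec Ob)) else 0)"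
    by (intro sum.cong[OF refl]) (simp add: rep_char_def)
  finally show ?thesis .
qed

lemma main:
  "Ind_char C c n \<rho> d \<sigma> =
           (\<Sum>\<mu> \<in> conj_classes C c. class_val n \<rho> \<mu> * of_nat (binomX C c \<mu> d \<sigma>))"
proof -
  have "Ind_char C c n \<rho> d \<sigma> = (\<Sum>b\<in>B0 - BK. tv.representation B0 (L b) b)"
    unfolding Ind_char_def quot_trace_def
    by (rule vector_space.quot_trace_gen[OF vs_tscale finB0 indep BK_B0 spanK spanW L_add L_sc L_W L_K])
  thus ?thesis using trace_BW RHS by simp
qed

end

theorem mainTheorem7:
  fixes C :: "('o, 'm) cat" and c d :: 'o and n :: nat
    and \<rho> :: "'m \<Rightarrow> nat \<Rightarrow> nat \<Rightarrow> complex" and \<sigma> :: 'm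
  assumes "FI_type C"
    and "is_matrep C c n \<rho>"
    and "\<sigma> \<in> Aut C d"
  shows "Ind_char C c n \<rho> d \<sigma> =
           (\<Sum>\<mu> \<in> conj_classes C c. class_val n \<rho> \<mu> * of_nat (binomX C c \<mu> d \<sigma>))"
proof -
  interpret fi C by (rule fi.intro) (rule assms(1))
  interpret fsetup C c d n \<rho> \<sigma>
    by (rule fsetup.intro, unfold_locales, rule assms(1), unfold_locales, rule assms(2))
       (use assms(3) aut in auto)
  show ?thesis by (rule main)
qed


end
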